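(* Let $\triangle ABC$ be an acute triangle circumscribed about an ellipse with semi-axes $a>b>0$ whose center coincides with the circumcenter of $\triangle ABC$. Then the inradius of the orthic triangle of $\triangle ABC$ equals $\dfrac{ab}{a+b}$.
   Context: A triangle is circumscribed about a conic if each of its three sidelines is tangent to the conic. The orthic triangle of $\triangle ABC$ is the triangle $H_AH_BH_C$ whose vertices are the feet of the perpendiculars from $A,B,C$ to the lines $BC,CA,AB$, respectively. *)

theory Defs
  imports "HOL-Analysis.Analysis"
begin

type_synonym point = "real^2"

definition sideline :: "point \<Rightarrow> point \<Rightarrow> point set" where
  "sideline P Q = affine hull {P, Q}"

definition nondegenerate_triangle :: "point \<Rightarrow> point \<Rightarrow> point \<Rightarrow> bool" where
  "nondegenerate_triangle A B C \<longleftrightarrow> \<not> collinear {A, B, C}"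

definition angle_at :: "point \<Rightarrow> point \<Rightarrow> point \<Rightarrow> real" where
  "angle_at X V Y = arccos (((X - V) \<bullet> (Y - V)) / (norm (X - V) * norm (Y - V)))"

definition acute_triangle :: "point \<Rightarrow> point \<Rightarrow> point \<Rightarrow> bool" where
  "acute_triangle A B C \<longleftrightarrow> nondegenerate_triangle A B C \<and>
     angle_at B A C < pi / 2 \<and> angle_at A B C < pi / 2 \<and> angle_at A C B < pi / 2"

definition is_circumcenter :: "point \<Rightarrow> point \<Rightarrow> point \<Rightarrow> point \<Rightarrow> bool" where
  "is_circumcenter Z A B C \<longleftrightarrow> dist Z A = dist Z B \<and> dist Z B = dist Z C"

definition ellipse :: "point \<Rightarrow> real \<Rightarrow> real \<Rightarrow> real \<Rightarrow> point set" where
  "ellipse Z a b th =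
     {X. ((X - Z) \<bullet> vector [cos th, sin th])\<^sup>2 / a\<^sup>2
       + ((X - Z) \<bullet> vector [- sin th, cos th])\<^sup>2 / b\<^sup>2 = 1}"

definition tangent_to :: "point set \<Rightarrow> point set \<Rightarrow> bool" where
  "tangent_to L E \<longleftrightarrow> (\<exists>X. L \<inter> E = {X})"

definition circumscribed_about :: "point \<Rightarrow> point \<Rightarrow> point \<Rightarrow> point set \<Rightarrow> bool" where
  "circumscribed_about A B C E \<longleftrightarrow>
     tangent_to (sideline B C) E \<and> tangent_to (sideline C A) E \<and> tangent_to (sideline A B) E"

definition foot :: "point \<Rightarrow> point \<Rightarrow> point \<Rightarrow> point" where
  "foot P Q R = Q + (((P - Q) \<bullet> (R - Q)) / ((R - Q) \<bullet> (R - Q))) *\<^sub>R (R - Q)"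

definition is_incircle :: "point \<Rightarrow> point \<Rightarrow> point \<Rightarrow> point \<Rightarrow> real \<Rightarrow> bool" where
  "is_incircle P Q R I r \<longleftrightarrow> r > 0 \<and> I \<in> interior (convex hull {P, Q, R}) \<and>
     infdist I (sideline Q R) = r \<and> infdist I (sideline R P) = r \<and> infdist I (sideline P Q) = r"

definition inradius :: "point \<Rightarrow> point \<Rightarrow> point \<Rightarrow> real" where
  "inradius P Q R = (THE r. \<exists>I. is_incircle P Q R I r)"

end

theory Submission
  imports Defs
begin

lemma tang_bilinear:
  fixes xi yi xj yj a b K :: real
  assumes ci: "xi^2+yi^2 = K" and cj: "xj^2+yj^2=K" and ne: "(xi,yi) \<noteq> (xj,yj)"
   and t: "(xi*yj - yi*xj)^2 = b^2*(xj-xi)^2 + a^2*(yj-yi)^2"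
  shows "(K - (a^2-b^2))*xi*xj + (K + (a^2-b^2))*yi*yj = (a^2+b^2-K)*K"
proof -
  let ?D = "xi*xj+yi*yj"
  let ?c = "xi*xj-yi*yj"
  have pos: "(xi-xj)^2+(yi-yj)^2 > 0" using ne by (auto simp: sum_power2_gt_zero_iff)
  have "2*(K - ?D) = (xi-xj)^2+(yi-yj)^2" using ci cj by (simp add: power2_eq_square algebra_simps)
  with pos have KD: "K - ?D \<noteq> 0" by auto
  have lag: "(xi*yj - yi*xj)^2 + ?D^2 = (xi^2+yi^2)*(xj^2+yj^2)" by (simp add: power2_eq_square algebra_simps)
  hence c2: "(xi*yj - yi*xj)^2 = K*K - ?D^2" using ci cj by simp
  have e1: "K*(xi*yj - yi*xj)^2 = K*(K - ?D)*(K + ?D)" unfolding c2 by (simp add: power2_eq_square algebra_simps)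
  have idy: "(K - ?D)*(K + ?c) - K*(yi-yj)^2 = (K - yi^2 - xi^2)*(K - yj^2) + xi^2*(K - yj^2 - xj^2)"
    by (simp add: power2_eq_square algebra_simps)
  have idx: "(K - ?D)*(K - ?c) - K*(xi-xj)^2 = (K - xi^2 - yi^2)*(K - xj^2) + yi^2*(K - xj^2 - yj^2)"
    by (simp add: power2_eq_square algebra_simps)
  have z1: "K - yi^2 - xi^2 = 0" "K - xi^2 - yi^2 = 0" using ci by auto
  have z2: "K - yj^2 - xj^2 = 0" "K - xj^2 - yj^2 = 0" using cj by auto
  have y: "K*(yi-yj)^2 = (K - ?D)*(K + ?c)" using idy unfolding z1 z2 by simp
  have x: "K*(xi-xj)^2 = (K - ?D)*(K - ?c)" using idx unfolding z1 z2 by simp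
  have e2: "K*(b^2*(xj-xi)^2 + a^2*(yj-yi)^2) = (K - ?D)*((a^2+b^2)*K + (a^2-b^2)*?c)"
  proof -
    have "K*(b^2*(xj-xi)^2 + a^2*(yj-yi)^2) = b^2*(K*(xi-xj)^2) + a^2*(K*(yi-yj)^2)"
      by (simp add: power2_eq_square algebra_simps)
    also have "\<dots> = b^2*((K - ?D)*(K - ?c)) + a^2*((K - ?D)*(K + ?c))" using x y by simp
    also have "\<dots> = (K - ?D)*((a^2+b^2)*K + (a^2-b^2)*?c)" by (simp add: algebra_simps)
    finally show ?thesis .
  qed
  have "(K - ?D)*(K*(K + ?D) - ((a^2+b^2)*K + (a^2-b^2)*?c)) = 0"
    using e1 e2 t by (simp add: algebra_simps)
  with KD have "K*(K + ?D) = ((a^2+b^2)*K + (a^2-b^2)*?c)" by simp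
  thus ?thesis by (simp add: algebra_simps)
qed

lemma vertex_eq:
  fixes x1 y1 x2 y2 x3 y3 K al be ga h :: real
  assumes c2: "x2^2+y2^2=K" and c3: "x3^2+y3^2=K" and ne: "(x2,y2) \<noteq> (x3,y3)"
   and E12: "al*x1*x2 + be*y1*y2 = ga" and E13: "al*x1*x3 + be*y1*y3 = ga"
   and hdef: "h = (x1+x2+x3)^2 + (y1+y2+y3)^2"
  shows "(al^2*x1^2 + be^2*y1^2)*h = (2*ga + al*x1^2 + be*y1^2)^2 + ((al-be)*x1*y1)^2"
proof -
  define n1 n2 s1 s2 d1 d2 where "n1 = al*x1" "n2 = be*y1" "s1 = x2+x3" "s2 = y2+y3"
    "d1 = x2-x3" "d2 = y2-y3"
  have ns: "n1* s1+n2* s2 = 2*ga" using E12 E13 unfolding n1_n2_s1_s2_d1_d2_def by (simp add: algebra_simps)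
  have nd: "n1*d1+n2*d2 = 0" using E12 E13 unfolding n1_n2_s1_s2_d1_d2_def by (simp add: algebra_simps)
  have sd: "s1*d1+s2*d2 = 0"
  proof -
    have "s1*d1+s2*d2 = (x2^2+y2^2) - (x3^2+y3^2)" unfolding n1_n2_s1_s2_d1_d2_def
      by (simp add: power2_eq_square algebra_simps)
    thus ?thesis using c2 c3 by simp
  qed
  have i1: "(n1* s2 - n2* s1)*d1 = s2*(n1*d1+n2*d2) - n2*(s1*d1+s2*d2)" by (simp add: algebra_simps)
  have i2: "(n1* s2 - n2* s1)*d2 = n1*(s1*d1+s2*d2) - s1*(n1*d1+n2*d2)" by (simp add: algebra_simps)
  have dne: "d1 \<noteq> 0 \<or> d2 \<noteq> 0" using ne unfolding n1_n2_s1_s2_d1_d2_def by auto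
  have cr: "n1* s2 - n2* s1 = 0" using i1 i2 nd sd dne by auto
  define H1 H2 where "H1 = x1 + s1" "H2 = y1 + s2"
  have lag: "(n1^2+n2^2)*(H1^2+H2^2) = (n1*H1+n2*H2)^2 + (n1*H2-n2*H1)^2"
    by (simp add: power2_eq_square algebra_simps)
  have nH: "n1*H1+n2*H2 = 2*ga + al*x1^2 + be*y1^2" using ns unfolding H1_H2_def
    by (simp add: n1_n2_s1_s2_d1_d2_def power2_eq_square algebra_simps)
  have cH: "n1*H2-n2*H1 = (al-be)*x1*y1"
  proof -
    have "n1*H2-n2*H1 = (n1* s2 - n2* s1) + (al-be)*x1*y1" unfolding H1_H2_def n1_n2_s1_s2_d1_d2_def
      by (simp add: algebra_simps)
    thus ?thesis using cr by simp
  qed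
  have hH: "h = H1^2+H2^2" unfolding hdef H1_H2_def n1_n2_s1_s2_d1_d2_def by (simp add: algebra_simps)
  have "n1^2+n2^2 = al^2*x1^2 + be^2*y1^2" unfolding n1_n2_s1_s2_d1_d2_def by (simp add: power2_eq_square)
  thus ?thesis using lag nH cH hH by simp
qed

lemma sq_eq_cases: "(u::real)^2 = w^2 \<Longrightarrow> u = w \<or> u = -w"
  by (metis power2_eq_iff)

lemma rect:
  fixes x1 y1 x2 y2 x3 y3 :: real
  assumes "x2^2 = x1^2" "x3^2 = x1^2" "y2^2 = y1^2" "y3^2 = y1^2"
    and "(x1,y1) \<noteq> (x2,y2)" "(x1,y1) \<noteq> (x3,y3)" "(x2,y2) \<noteq> (x3,y3)"
  shows "(x1+x2+x3)^2 + (y1+y2+y3)^2 = x1^2+y1^2"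
proof -
  have "x2 = x1 \<or> x2 = -x1" "x3 = x1 \<or> x3 = -x1" "y2 = y1 \<or> y2 = -y1" "y3 = y1 \<or> y3 = -y1"
    using assms(1-4) sq_eq_cases by blast+
  thus ?thesis using assms(5-7) by (auto simp: power2_eq_square algebra_simps)
qed

lemma lin_from_vertex:
  fixes al be ga h u v K :: real
  assumes "(al^2*u + be^2* v)*h = (2*ga + al*u + be* v)^2 + (al-be)^2*u* v" "v = K - u"
  shows "(2*(2*ga+be*K)*(al-be) + (al-be)^2*K - (al^2-be^2)*h)*u + ((2*ga+be*K)^2 - be^2*K*h) = 0"
proof -
  have "(al^2*u + be^2*(K-u))*h - ((2*ga + al*u + be*(K-u))^2 + (al-be)^2*u*(K-u))
     = - ((2*(2*ga+be*K)*(al-be) + (al-be)^2*K - (al^2-be^2)*h)*u + ((2*ga+be*K)^2 - be^2*K*h))"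
    by (simp add: power2_eq_square algebra_simps)
  thus ?thesis using assms by simp
qed

lemma core:
  fixes x1 y1 x2 y2 x3 y3 a b K h :: real
  assumes c1: "x1^2+y1^2 = K" and c2: "x2^2+y2^2 = K" and c3: "x3^2+y3^2 = K"
    and ne12: "(x1,y1) \<noteq> (x2,y2)" and ne13: "(x1,y1) \<noteq> (x3,y3)" and ne23: "(x2,y2) \<noteq> (x3,y3)"
    and t12: "(x1*y2 - y1*x2)^2 = b^2*(x2-x1)^2 + a^2*(y2-y1)^2"
    and t13: "(x1*y3 - y1*x3)^2 = b^2*(x3-x1)^2 + a^2*(y3-y1)^2"
    and t23: "(x2*y3 - y2*x3)^2 = b^2*(x3-x2)^2 + a^2*(y3-y2)^2"
    and b0: "0 < b" and ab: "b < a"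
    and hdef: "h = (x1+x2+x3)^2 + (y1+y2+y3)^2" and hK: "h < K"
  shows "K = (a+b)^2 \<and> h = (a-b)^2"
proof -
  define P M where "P = a^2+b^2" "M = a^2-b^2"
  define al be ga where "al = K - M" "be = K + M" "ga = (P-K)*K"
  have E: "al*xi*xj + be*yi*yj = ga"
    if "xi^2+yi^2 = K" "xj^2+yj^2=K" "(xi,yi) \<noteq> (xj,yj)"
      "(xi*yj - yi*xj)^2 = b^2*(xj-xi)^2 + a^2*(yj-yi)^2" for xi yi xj yj
    using tang_bilinear[OF that] unfolding al_be_ga_def P_M_def by simp
  have E12: "al*x1*x2 + be*y1*y2 = ga" by (rule E[OF c1 c2 ne12 t12])
  have E13: "al*x1*x3 + be*y1*y3 = ga" by (rule E[OF c1 c3 ne13 t13])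
  have E23: "al*x2*x3 + be*y2*y3 = ga" by (rule E[OF c2 c3 ne23 t23])
  have E21: "al*x2*x1 + be*y2*y1 = ga" using E12 by (simp add: ac_simps)
  have E31: "al*x3*x1 + be*y3*y1 = ga" using E13 by (simp add: ac_simps)
  have E32: "al*x3*x2 + be*y3*y2 = ga" using E23 by (simp add: ac_simps)
  define cc1 cc2 where "cc1 = 2*(2*ga+be*K)*(al-be) + (al-be)^2*K - (al^2-be^2)*h"
    "cc2 = (2*ga+be*K)^2 - be^2*K*h"
  have L: "cc1*xi^2 + cc2 = 0"
    if "xi^2+yi^2 = K" "xj^2+yj^2 = K" "xk^2+yk^2 = K" "(xj,yj) \<noteq> (xk,yk)"
      "al*xi*xj + be*yi*yj = ga" "al*xi*xk + be*yi*yk = ga"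
      "h = (xi+xj+xk)^2 + (yi+yj+yk)^2" for xi yi xj yj xk yk
  proof -
    have V: "(al^2*xi^2 + be^2*yi^2)*h = (2*ga + al*xi^2 + be*yi^2)^2 + ((al-be)*xi*yi)^2"
      by (rule vertex_eq[OF that(2-7)])
    have "(al^2*xi^2 + be^2*yi^2)*h = (2*ga + al*xi^2 + be*yi^2)^2 + (al-be)^2*xi^2*yi^2"
      using V by (simp add: power_mult_distrib)
    from lin_from_vertex[OF this] that(1) show ?thesis unfolding cc1_cc2_def by simp
  qed
  have L1: "cc1*x1^2 + cc2 = 0" by (rule L[OF c1 c2 c3 ne23 E12 E13 hdef])
  have L2: "cc1*x2^2 + cc2 = 0" by (rule L[OF c2 c1 c3 ne13 E21 E23]) (simp add: hdef algebra_simps)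
  have L3: "cc1*x3^2 + cc2 = 0" by (rule L[OF c3 c1 c2 ne12 E31 E32]) (simp add: hdef algebra_simps)
  have Kpos: "K > 0"
  proof -
    have "K \<ge> 0" using c1 by (metis add_nonneg_nonneg zero_le_power2)
    moreover have "K \<noteq> 0"
    proof
      assume "K = 0"
      hence "x1 = 0 \<and> y1 = 0" "x2 = 0 \<and> y2 = 0" using c1 c2 by (auto simp: sum_power2_eq_zero_iff)
      thus False using ne12 by simp
    qed
    ultimately show ?thesis by simp
  qed
  have cc1z: "cc1 = 0"
  proof (rule ccontr)
    assume nz: "cc1 \<noteq> 0"
    have "x2^2 = x1^2" "x3^2 = x1^2" using L1 L2 L3 nz by (metis add_right_cancel mult_left_cancel)+
    moreover have "y2^2 = y1^2" "y3^2 = y1^2" using calculation c1 c2 c3 by linarith+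
    ultimately have "h = K" using rect[OF _ _ _ _ ne12 ne13 ne23] hdef c1 by simp
    thus False using hK by simp
  qed
  hence cc2z: "cc2 = 0" using L1 by simp
  have M0: "M \<noteq> 0"
  proof -
    have "b^2 < a^2" using b0 ab by (simp add: power_strict_mono)
    thus ?thesis unfolding P_M_def by simp
  qed
  have "cc1 = -4*M*K*(2*P - K - h)" unfolding cc1_cc2_def al_be_ga_def
    by (simp add: power2_eq_square algebra_simps)
  hence hv: "h = 2*P - K" using cc1z M0 Kpos by simp
  have "cc2 = 2*K*(K-P)*(K^2 - 2*P*K + M^2)" unfolding cc1_cc2_def al_be_ga_def hv
    by (simp add: power2_eq_square algebra_simps)
  hence z: "K*(K-P)*(K^2 - 2*P*K + M^2) = 0" using cc2z by simp
  have KP: "K > P" using hv hK by simp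
  have q: "K^2 - 2*P*K + M^2 = 0" using z KP Kpos by simp
  have "(K - (a+b)^2)*(K - (a-b)^2) = K^2 - 2*P*K + M^2" unfolding P_M_def
    by (simp add: power2_eq_square algebra_simps)
  hence f: "(K - (a+b)^2)*(K - (a-b)^2) = 0" using q by simp
  have "P - (a-b)^2 = 2*a*b" unfolding P_M_def by (simp add: power2_eq_square algebra_simps)
  moreover have "2*a*b > 0" using b0 ab by simp
  ultimately have "K \<noteq> (a-b)^2" using KP by linarith
  hence K: "K = (a+b)^2" using f by simp
  have "h = (a-b)^2" unfolding hv K P_M_def by (simp add: power2_eq_square algebra_simps)
  with K show ?thesis by simp
qed

definition cross2 :: "point \<Rightarrow> point \<Rightarrow> real" where
  "cross2 u w = u$1 * w$2 - u$2 * w$1"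

lemma inner2: "(x::point) \<bullet> y = x$1*y$1 + x$2*y$2"
  by (simp add: inner_vec_def sum_2)

lemma vec2_eqI: "(x::point)$1 = y$1 \<Longrightarrow> x$2 = y$2 \<Longrightarrow> x = y"
  by (simp add: vec_eq_iff forall_2)

lemma vec2_zero_test:
  fixes V u w :: point
  assumes "cross2 u w \<noteq> 0" "V \<bullet> u = 0" "V \<bullet> w = 0"
  shows "V = 0"
proof -
  have a: "V$1*u$1 + V$2*u$2 = 0" "V$1*w$1 + V$2*w$2 = 0" using assms(2,3) by (simp_all add: inner2)
  have "V$1 * cross2 u w = w$2*(V$1*u$1 + V$2*u$2) - u$2*(V$1*w$1 + V$2*w$2)"
    by (simp add: cross2_def algebra_simps)
  hence 1: "V$1 = 0" using a assms(1) by simp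
  have "V$2 * cross2 u w = u$1*(V$1*w$1 + V$2*w$2) - w$1*(V$1*u$1 + V$2*u$2)"
    by (simp add: cross2_def algebra_simps)
  hence 2: "V$2 = 0" using a assms(1) by simp
  show ?thesis using 1 2 by (intro vec2_eqI) simp_all
qed

lemma sideline_param: "sideline Q R = {Q + t *\<^sub>R (R - Q) | t. True}"
proof -
  have "sideline Q R = {u *\<^sub>R Q + v *\<^sub>R R |u v. u + v = 1}" unfolding sideline_def by (rule affine_hull_2)
  also have "\<dots> = {Q + t *\<^sub>R (R - Q) | t. True}"
  proof (intro set_eqI iffI)
    fix X assume "X \<in> {u *\<^sub>R Q + v *\<^sub>R R |u v. u + v = 1}"
    then obtain u v where "u + v = 1" "X = u *\<^sub>R Q + v *\<^sub>R R" by blast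
    hence "X = Q + v *\<^sub>R (R - Q)" by (simp add: algebra_simps flip: scaleR_add_left)
    thus "X \<in> {Q + t *\<^sub>R (R - Q) | t. True}" by blast
  next
    fix X assume "X \<in> {Q + t *\<^sub>R (R - Q) | t. True}"
    then obtain t where "X = Q + t *\<^sub>R (R - Q)" by blast
    hence "X = (1 - t) *\<^sub>R Q + t *\<^sub>R R" by (simp add: algebra_simps)
    thus "X \<in> {u *\<^sub>R Q + v *\<^sub>R R |u v. u + v = 1}" by force
  qed
  finally show ?thesis .
qed

lemma dist_line_sq:
  fixes X Q R :: point and t :: real
  assumes "Q \<noteq> R"
  shows "(dist X (Q + t *\<^sub>R (R - Q)))^2 * (norm (R - Q))^2
     = (cross2 (R - Q) (X - Q))^2 + ((X - Q) \<bullet> (R - Q) - t * (norm (R-Q))^2)^2"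
proof -
  have n: "(norm v)^2 = v$1^2 + v$2^2" for v :: point
    unfolding power2_norm_eq_inner inner2 by (simp add: power2_eq_square)
  have d: "(dist X (Q + t *\<^sub>R (R - Q)))^2 = (X$1 - Q$1 - t*(R$1-Q$1))^2 + (X$2 - Q$2 - t*(R$2-Q$2))^2"
    unfolding dist_norm n by (simp add: algebra_simps)
  show ?thesis unfolding d n cross2_def inner2 by (simp add: power2_eq_square algebra_simps)
qed

lemma infdist_line:
  fixes X Q R :: point
  assumes "Q \<noteq> R"
  shows "infdist X (sideline Q R) = \<bar>cross2 (R - Q) (X - Q)\<bar> / norm (R - Q)"
proof -
  let ?w = "R - Q"
  let ?c = "\<bar>cross2 (R - Q) (X - Q)\<bar> / norm (R - Q)"
  have nw: "norm ?w > 0" using assms by simp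
  have lb: "?c \<le> dist X Y" if Yin: "Y \<in> sideline Q R" for Y
  proof -
    obtain t where Y: "Y = Q + t *\<^sub>R ?w" using Yin unfolding sideline_param by blast
    have "(cross2 ?w (X - Q))^2 \<le> (dist X Y)^2 * (norm ?w)^2"
      unfolding Y dist_line_sq[OF assms] by simp
    hence "(?c)^2 \<le> (dist X Y)^2" using nw by (simp add: power_divide divide_le_eq)
    thus ?thesis by (rule power2_le_imp_le) simp
  qed
  define t0 where "t0 = ((X - Q) \<bullet> ?w) / (norm ?w)^2"
  have Y0: "Q + t0 *\<^sub>R ?w \<in> sideline Q R" unfolding sideline_param by blast
  have "(dist X (Q + t0 *\<^sub>R ?w))^2 * (norm ?w)^2 = (cross2 ?w (X - Q))^2"
    unfolding dist_line_sq[OF assms] t0_def using nw by simp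
  hence "(dist X (Q + t0 *\<^sub>R ?w))^2 = (?c)^2" using nw by (simp add: power_divide eq_divide_eq)
  hence eq: "dist X (Q + t0 *\<^sub>R ?w) = ?c"
    by (metis abs_of_nonneg divide_nonneg_nonneg norm_ge_zero power2_eq_iff_nonneg abs_ge_zero zero_le_dist)
  have "infdist X (sideline Q R) \<le> ?c" using infdist_le[OF Y0, of X] eq by simp
  moreover have "?c \<le> infdist X (sideline Q R)"
  proof -
    have ne: "sideline Q R \<noteq> {}" using Y0 by blast
    show ?thesis unfolding infdist_def using ne lb by (auto intro!: cINF_greatest)
  qed
  ultimately show ?thesis by simp
qed

lemma abs_div_eqI:
  fixes a b p q :: real
  assumes "p > 0" "q > 0" "a^2 * q^2 = b^2 * p^2"
  shows "\<bar>a\<bar> / p = \<bar>b\<bar> / q"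
proof -
  have "(\<bar>a\<bar> / p)^2 = (\<bar>b\<bar> / q)^2" using assms
    by (simp add: power_divide field_simps)
  thus ?thesis by (rule power2_eq_imp_eq) (use assms in auto)
qed

lemma infdist_line_normal:
  fixes X Q R n :: point
  assumes "Q \<noteq> R" "n \<noteq> 0" "(R - Q) \<bullet> n = 0"
  shows "infdist X (sideline Q R) = \<bar>(X - Q) \<bullet> n\<bar> / norm n"
proof -
  let ?w = "R - Q" and ?z = "X - Q"
  have n: "(norm v)^2 = v$1^2 + v$2^2" for v :: point
    unfolding power2_norm_eq_inner inner2 by (simp add: power2_eq_square)
  have wn: "?w$1*n$1 + ?w$2*n$2 = 0" using assms(3) by (simp add: inner2)
  have i1: "(norm ?w)^2 * (?z \<bullet> n) = cross2 ?w n * cross2 ?w ?z + (?w$1*n$1 + ?w$2*n$2) * (?z \<bullet> ?w)"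
    unfolding n inner2 cross2_def by (simp add: power2_eq_square algebra_simps)
  have i2: "(cross2 ?w n)^2 = (norm ?w)^2 * (norm n)^2 - (?w$1*n$1 + ?w$2*n$2)^2"
    unfolding n cross2_def by (simp add: power2_eq_square algebra_simps)
  have pw: "norm ?w > 0" "norm n > 0" using assms by auto
  define zn cz cn W N where "zn = ?z \<bullet> n" "cz = cross2 ?w ?z" "cn = cross2 ?w n"
    "W = (norm ?w)^2" "N = (norm n)^2"
  have i1': "W * zn = cn * cz" using i1 wn unfolding zn_cz_cn_W_N_def by simp
  have i2': "cn^2 = W * N" using i2 wn unfolding zn_cz_cn_W_N_def by simp
  have Wp: "W > 0" using pw unfolding zn_cz_cn_W_N_def by simp
  have "W * (W * zn^2) = (W * zn)^2" by (simp add: power2_eq_square)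
  also have "\<dots> = cn^2 * cz^2" unfolding i1' by (simp add: power_mult_distrib)
  also have "\<dots> = W * (N * cz^2)" unfolding i2' by simp
  finally have "W * zn^2 = N * cz^2" using Wp by simp
  hence "(cross2 ?w ?z)^2 * (norm n)^2 = (?z \<bullet> n)^2 * (norm ?w)^2" unfolding zn_cz_cn_W_N_def by (simp add: algebra_simps)
  thus ?thesis unfolding infdist_line[OF assms(1)] by (rule abs_div_eqI[OF pw])
qed

lemma collinear_cross:
  fixes A B C :: point
  shows "collinear {A, B, C} \<longleftrightarrow> cross2 (B - A) (C - A) = 0"
proof
  assume "collinear {A, B, C}"
  then obtain u v where uv: "\<forall>x\<in>{A,B,C}. \<exists>c. x = u + c *\<^sub>R v" unfolding collinear_alt by blast
  then obtain ca cb cc where "A = u + ca *\<^sub>R v" "B = u + cb *\<^sub>R v" "C = u + cc *\<^sub>R v" by blast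
  thus "cross2 (B - A) (C - A) = 0" by (simp add: cross2_def algebra_simps)
next
  assume cr: "cross2 (B - A) (C - A) = 0"
  show "collinear {A, B, C}"
  proof (cases "B = A")
    case True thus ?thesis by (simp add: collinear_2)
  next
    case False
    let ?u = "B - A"
    define t where "t = ((C - A) \<bullet> ?u) / (?u \<bullet> ?u)"
    define w :: point where "w = vector [- ?u$2, ?u$1]"
    have uu: "?u \<bullet> ?u \<noteq> 0" using False by simp
    have cw: "cross2 ?u w = ?u \<bullet> ?u" unfolding w_def cross2_def inner2 by (simp add: power2_eq_square algebra_simps)
    have "(C - A) - t *\<^sub>R ?u = 0"
    proof (rule vec2_zero_test[of ?u w])
      show "cross2 ?u w \<noteq> 0" using cw uu by simp
      show "(C - A - t *\<^sub>R ?u) \<bullet> ?u = 0" unfolding t_def using uu by (simp add: inner_diff_left)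
      show "(C - A - t *\<^sub>R ?u) \<bullet> w = 0" using cr unfolding w_def cross2_def inner2 by (simp add: algebra_simps)
    qed
    hence C: "C = A + t *\<^sub>R (B - A)" by (simp add: algebra_simps)
    show ?thesis unfolding collinear_alt
      by (rule exI[of _ A], rule exI[of _ "B - A"]) (auto simp: C intro: exI[of _ 0] exI[of _ 1] exI[of _ t])
  qed
qed

lemma bary_cross:
  fixes P Q R I :: point
  assumes "I = u *\<^sub>R P + v *\<^sub>R Q + w *\<^sub>R R" "u + v + w = 1"
  shows "cross2 (R - Q) (I - Q) = u * cross2 (R - Q) (P - Q)"
proof -
  have v: "v = 1 - u - w" using assms(2) by simp
  show ?thesis unfolding assms(1) v cross2_def by (simp add: algebra_simps)
qed

definition rho :: "point \<Rightarrow> point \<Rightarrow> point \<Rightarrow> real" where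
  "rho P Q R = 1 / (1 / infdist P (sideline Q R) + 1 / infdist Q (sideline R P) + 1 / infdist R (sideline P Q))"

lemma incircle_unique:
  assumes "is_incircle P Q R I r"
  shows "r = rho P Q R"
proof -
  have r0: "r > 0" and Iint: "I \<in> interior (convex hull {P, Q, R})"
    and d1: "infdist I (sideline Q R) = r" and d2: "infdist I (sideline R P) = r"
    and d3: "infdist I (sideline P Q) = r" using assms unfolding is_incircle_def by auto
  have ine: "interior (convex hull {P,Q,R}) \<noteq> {}" using Iint by blast
  have emp: "interior (convex hull {P,Q,R}) = {}" if "card {P,Q,R} \<le> 2"
    by (rule empty_interior_convex_hull) (use that in auto)
  have ne: "P \<noteq> Q" "Q \<noteq> R" "R \<noteq> P"
  proof -
    show "P \<noteq> Q"
    proof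
      assume "P = Q" hence "card {P,Q,R} \<le> 2" by (simp add: card_insert_if)
      thus False using emp ine by blast
    qed
    show "Q \<noteq> R"
    proof
      assume "Q = R" hence "card {P,Q,R} \<le> 2" by (simp add: card_insert_if)
      thus False using emp ine by blast
    qed
    show "R \<noteq> P"
    proof
      assume "R = P" hence "card {P,Q,R} \<le> 2" by (simp add: card_insert_if)
      thus False using emp ine by blast
    qed
  qed
  have "I \<in> convex hull {P,Q,R}" using Iint interior_subset by blast
  then obtain u v w where uvw: "0 \<le> u" "0 \<le> v" "0 \<le> w" "u + v + w = 1"
    "I = u *\<^sub>R P + v *\<^sub>R Q + w *\<^sub>R R" unfolding convex_hull_3 by blast
  have c1: "cross2 (R - Q) (I - Q) = u * cross2 (R - Q) (P - Q)"
    by (rule bary_cross[OF uvw(5,4)])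
  have c2: "cross2 (P - R) (I - R) = v * cross2 (P - R) (Q - R)"
    by (rule bary_cross[of I v Q w R u P]) (use uvw in \<open>simp_all add: algebra_simps\<close>)
  have c3: "cross2 (Q - P) (I - P) = w * cross2 (Q - P) (R - P)"
    by (rule bary_cross[of I w R u P v Q]) (use uvw in \<open>simp_all add: algebra_simps\<close>)
  have h1: "r = u * infdist P (sideline Q R)"
    using d1 unfolding infdist_line[OF ne(2)] c1 using uvw(1) by (simp add: abs_mult)
  have h2: "r = v * infdist Q (sideline R P)"
    using d2 unfolding infdist_line[OF ne(3)] c2 using uvw(2) by (simp add: abs_mult)
  have h3: "r = w * infdist R (sideline P Q)"
    using d3 unfolding infdist_line[OF ne(1)] c3 using uvw(3) by (simp add: abs_mult)
  define a1 a2 a3 where "a1 = infdist P (sideline Q R)" "a2 = infdist Q (sideline R P)" "a3 = infdist R (sideline P Q)"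
  have p: "a1 > 0" "a2 > 0" "a3 > 0" using h1 h2 h3 r0 infdist_nonneg unfolding a1_a2_a3_def
    by (metis less_eq_real_def mult_zero_right)+
  have "u = r / a1" using h1 p(1) unfolding a1_a2_a3_def by (simp add: eq_divide_eq)
  moreover have "v = r / a2" using h2 p(2) unfolding a1_a2_a3_def by (simp add: eq_divide_eq)
  moreover have "w = r / a3" using h3 p(3) unfolding a1_a2_a3_def by (simp add: eq_divide_eq)
  ultimately have "r * (1/a1 + 1/a2 + 1/a3) = 1" using uvw(4) by (simp add: field_simps)
  moreover have "1/a1 + 1/a2 + 1/a3 > 0" using p by (intro add_pos_pos) simp_all
  ultimately have "r = 1 / (1/a1 + 1/a2 + 1/a3)" by (simp add: eq_divide_eq)
  thus ?thesis unfolding rho_def a1_a2_a3_def .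
qed

definition rx :: "point \<Rightarrow> real \<Rightarrow> point \<Rightarrow> real" where
  "rx Z th X = (X - Z) \<bullet> vector [cos th, sin th]"
definition ry :: "point \<Rightarrow> real \<Rightarrow> point \<Rightarrow> real" where
  "ry Z th X = (X - Z) \<bullet> vector [- sin th, cos th]"

lemma rot_aux:
  fixes c s u1 u2 v1 v2 :: real
  assumes "c * c + s * s = 1"
  shows "(u1 * c + u2 * s) * (v1 * c + v2 * s) + (- u1 * s + u2 * c) * (- v1 * s + v2 * c) = u1* v1 + u2* v2"
proof -
  have "(u1 * c + u2 * s) * (v1 * c + v2 * s) + (- u1 * s + u2 * c) * (- v1 * s + v2 * c) = (u1* v1 + u2* v2) * (c * c + s * s)"
    by (simp add: algebra_simps)
  thus ?thesis using assms by simp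
qed

lemma rot_inner:
  fixes U V :: point
  shows "(U \<bullet> vector [cos th, sin th]) * (V \<bullet> vector [cos th, sin th])
       + (U \<bullet> vector [- sin th, cos th]) * (V \<bullet> vector [- sin th, cos th]) = U \<bullet> V"
proof -
  have cs: "cos th * cos th + sin th * sin th = 1" by (simp flip: power2_eq_square)
  have "(U \<bullet> vector [cos th, sin th]) * (V \<bullet> vector [cos th, sin th])
       + (U \<bullet> vector [- sin th, cos th]) * (V \<bullet> vector [- sin th, cos th])
     = (U$1 * cos th + U$2 * sin th) * (V$1 * cos th + V$2 * sin th) + (- U$1 * sin th + U$2 * cos th) * (- V$1 * sin th + V$2 * cos th)"
    by (simp add: inner2 algebra_simps)
  also have "\<dots> = U$1*V$1 + U$2*V$2" by (rule rot_aux[OF cs])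
  also have "\<dots> = U \<bullet> V" by (simp add: inner2)
  finally show ?thesis .
qed

lemma rx_ry_inner: "rx Z th X * rx Z th Y + ry Z th X * ry Z th Y = (X - Z) \<bullet> (Y - Z)"
  unfolding rx_def ry_def by (rule rot_inner)

lemma rx_ry_diff: "(rx Z th Y - rx Z th X)^2 + (ry Z th Y - ry Z th X)^2 = (Y - X) \<bullet> (Y - X)"
proof -
  have "rx Z th Y - rx Z th X = (Y - X) \<bullet> vector [cos th, sin th]"
       "ry Z th Y - ry Z th X = (Y - X) \<bullet> vector [- sin th, cos th]"
    unfolding rx_def ry_def by (simp_all add: inner_diff_left)
  thus ?thesis using rot_inner[of "Y - X" th "Y - X"] by (simp add: power2_eq_square)
qed

lemma ellipse_mem: "X \<in> ellipse Z a b th \<longleftrightarrow> (rx Z th X)^2 / a^2 + (ry Z th X)^2 / b^2 = 1"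
  unfolding ellipse_def rx_def ry_def by simp

lemma rx_line: "rx Z th (B + t *\<^sub>R (C - B)) = rx Z th B + t * (rx Z th C - rx Z th B)"
  unfolding rx_def by (simp add: inner_diff_left inner_add_left algebra_simps)
lemma ry_line: "ry Z th (B + t *\<^sub>R (C - B)) = ry Z th B + t * (ry Z th C - ry Z th B)"
  unfolding ry_def by (simp add: inner_diff_left inner_add_left algebra_simps)

lemma tangent_cond:
  assumes BC: "B \<noteq> C" and a0: "a > 0" and b0: "b > 0"
    and tg: "tangent_to (sideline B C) (ellipse Z a b th)"
  shows "(rx Z th B * ry Z th C - ry Z th B * rx Z th C)^2
       = b^2*(rx Z th C - rx Z th B)^2 + a^2*(ry Z th C - ry Z th B)^2"
proof -
  define xB yB xC yC where "xB = rx Z th B" "yB = ry Z th B" "xC = rx Z th C" "yC = ry Z th C"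
  define dx dy where "dx = xC - xB" "dy = yC - yB"
  define Aq Bq Cq where "Aq = b^2*dx^2 + a^2*dy^2" "Bq = b^2*xB*dx + a^2*yB*dy"
    "Cq = b^2*xB^2 + a^2*yB^2 - a^2*b^2"
  define q where "q t = Aq*t^2 + 2*Bq*t + Cq" for t
  have mem: "B + t *\<^sub>R (C - B) \<in> ellipse Z a b th \<longleftrightarrow> q t = 0" for t
  proof -
    have "B + t *\<^sub>R (C - B) \<in> ellipse Z a b th \<longleftrightarrow> (xB + t*dx)^2 / a^2 + (yB + t*dy)^2 / b^2 = 1"
      unfolding ellipse_mem rx_line ry_line xB_yB_xC_yC_def dx_dy_def by simp
    also have "\<dots> \<longleftrightarrow> b^2*(xB + t*dx)^2 + a^2*(yB + t*dy)^2 = a^2*b^2"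
      using a0 b0 by (simp add: field_simps) (rule eq_commute)
    also have "\<dots> \<longleftrightarrow> q t = 0" unfolding q_def Aq_Bq_Cq_def
      by (simp add: power2_eq_square algebra_simps)
    finally show ?thesis .
  qed
  have dd: "dx^2 + dy^2 > 0"
  proof -
    have "dx^2 + dy^2 = (C - B) \<bullet> (C - B)" unfolding dx_dy_def xB_yB_xC_yC_def by (rule rx_ry_diff)
    thus ?thesis using BC by simp
  qed
  have Ap: "Aq > 0"
  proof -
    have "dx \<noteq> 0 \<or> dy \<noteq> 0" using dd by auto
    thus ?thesis unfolding Aq_Bq_Cq_def using a0 b0
      by (auto intro: add_pos_nonneg add_nonneg_pos)
  qed
  obtain X0 where X0: "sideline B C \<inter> ellipse Z a b th = {X0}" using tg unfolding tangent_to_def by blast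
  then obtain t0 where t0: "X0 = B + t0 *\<^sub>R (C - B)" unfolding sideline_param by blast
  have qt0: "q t0 = 0" using X0 t0 mem by blast
  have Aqq: "Aq * q t = (Aq*t + Bq)^2 - (Bq^2 - Aq*Cq)" for t unfolding q_def
    by (simp add: power2_eq_square algebra_simps)
  have disc: "Bq^2 - Aq*Cq = 0"
  proof (rule ccontr)
    assume nz: "Bq^2 - Aq*Cq \<noteq> 0"
    have e0: "(Aq*t0 + Bq)^2 = Bq^2 - Aq*Cq" using Aqq[of t0] qt0 by simp
    hence ne: "Aq*t0 + Bq \<noteq> 0" using nz by auto
    define t1 where "t1 = - 2*Bq/Aq - t0"
    have h1: "Aq*t1 + Bq = - (Aq*t0 + Bq)" unfolding t1_def using Ap by (simp add: field_simps)
    have "(Aq*t1 + Bq)^2 = (Aq*t0 + Bq)^2" unfolding h1 by (simp only: power2_minus)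
    hence "Aq * q t1 = 0" using Aqq[of t1] e0 by simp
    hence "q t1 = 0" using Ap by simp
    hence "B + t1 *\<^sub>R (C - B) \<in> sideline B C \<inter> ellipse Z a b th"
      using mem unfolding sideline_param by blast
    hence "B + t1 *\<^sub>R (C - B) = B + t0 *\<^sub>R (C - B)" using X0 t0 by blast
    hence "t1 = t0" using BC by simp
    hence "Aq*t0 + Bq = 0" unfolding t1_def using Ap by (simp add: field_simps)
    thus False using ne by simp
  qed
  have lag: "Aq*Cq - Bq^2 = a^2*b^2*((xB*yC - yB*xC)^2 - Aq)"
    unfolding Aq_Bq_Cq_def dx_dy_def by (simp add: power2_eq_square algebra_simps)
  have "a^2*b^2*((xB*yC - yB*xC)^2 - Aq) = 0" using lag disc by simp
  hence "(xB*yC - yB*xC)^2 = Aq" using a0 b0 by simp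
  thus ?thesis unfolding Aq_Bq_Cq_def dx_dy_def xB_yB_xC_yC_def .
qed

lemma orthic_core:
  fixes pA pB pC :: point and K :: real
  assumes nA: "pA \<bullet> pA = K" and nB: "pB \<bullet> pB = K" and nC: "pC \<bullet> pC = K"
    and cr: "cross2 (pB - pA) (pC - pA) \<noteq> 0"
    and aA: "(pB - pA) \<bullet> (pC - pA) > 0" and aB: "(pA - pB) \<bullet> (pC - pB) > 0"
    and aC: "(pA - pC) \<bullet> (pB - pC) > 0"
  shows "(foot pC pA pB - foot pB pC pA) \<bullet> pA = 0"
    and "(pA + pB + pC - foot pB pC pA) \<bullet> pA = (K + pA \<bullet> pB + pB \<bullet> pC + pC \<bullet> pA) / 2"
proof -
  define dAB dBC dCA where "dAB = pA \<bullet> pB" "dBC = pB \<bullet> pC" "dCA = pC \<bullet> pA"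
  have r: "pA \<bullet> pB = dAB" "pB \<bullet> pA = dAB" "pB \<bullet> pC = dBC" "pC \<bullet> pB = dBC"
     "pC \<bullet> pA = dCA" "pA \<bullet> pC = dCA" unfolding dAB_dBC_dCA_def by (simp_all add: inner_commute)
  define al1 al2 al3 where "al1 = dBC - dAB - dCA + K" "al2 = dCA - dAB - dBC + K" "al3 = dAB - dCA - dBC + K"
  have a1: "al1 > 0" using aA unfolding al1_al2_al3_def by (simp add: inner_diff_left inner_diff_right r nA nB nC)
  have a2: "al2 > 0" using aB unfolding al1_al2_al3_def by (simp add: inner_diff_left inner_diff_right r nA nB nC)
  have a3: "al3 > 0" using aC unfolding al1_al2_al3_def by (simp add: inner_diff_left inner_diff_right r nA nB nC)
  have fB: "foot pB pC pA = pC + (al3 / (al3 + al1)) *\<^sub>R (pA - pC)"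
    unfolding foot_def al1_al2_al3_def by (simp add: inner_diff_left inner_diff_right r nA nB nC algebra_simps)
  have fC: "foot pC pA pB = pA + (al1 / (al1 + al2)) *\<^sub>R (pB - pA)"
    unfolding foot_def al1_al2_al3_def by (simp add: inner_diff_left inner_diff_right r nA nB nC algebra_simps)
  have dd: "dAB = K - (al1+al2)/2" "dBC = K - (al2+al3)/2" "dCA = K - (al3+al1)/2"
    unfolding al1_al2_al3_def by (simp_all add: field_simps)
  have nz: "al3 + al1 \<noteq> 0" "al1 + al2 \<noteq> 0" "al2 + al3 \<noteq> 0" using a1 a2 a3 by auto
  have eC: "foot pC pA pB \<bullet> pA = K - al1/2"
  proof -
    have "foot pC pA pB \<bullet> pA = K + (al1/(al1+al2)) * (dAB - K)" unfolding fC
      by (simp add: inner_diff_left inner_add_left r nA)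
    also have "\<dots> = K - al1/2" using nz(2) unfolding dd by (simp add: field_simps)
    finally show ?thesis .
  qed
  have eB: "foot pB pC pA \<bullet> pA = dCA + al3/2"
  proof -
    have "foot pB pC pA \<bullet> pA = dCA + (al3/(al3+al1)) * (K - dCA)" unfolding fB
      by (simp add: inner_diff_left inner_add_left r nA)
    also have "\<dots> = dCA + al3/2" using nz(1) unfolding dd by (simp add: field_simps)
    finally show ?thesis .
  qed
  show "(foot pC pA pB - foot pB pC pA) \<bullet> pA = 0"
    unfolding inner_diff_left eC eB using dd by (simp add: field_simps)
  show "(pA + pB + pC - foot pB pC pA) \<bullet> pA = (K + pA \<bullet> pB + pB \<bullet> pC + pC \<bullet> pA) / 2"
    unfolding inner_diff_left inner_add_left eB r nA using dd by (simp add: field_simps)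
qed

lemma cross2_scaleR_right: "cross2 u (t *\<^sub>R w) = t * cross2 u w"
  by (simp add: cross2_def algebra_simps)
lemma cross2_self: "cross2 u u = 0"
  by (simp add: cross2_def algebra_simps)

lemma orthic_core2:
  fixes pA pB pC :: point and K :: real
  assumes nA: "pA \<bullet> pA = K" and nB: "pB \<bullet> pB = K" and nC: "pC \<bullet> pC = K"
    and cr: "cross2 (pB - pA) (pC - pA) \<noteq> 0"
    and aA: "(pB - pA) \<bullet> (pC - pA) > 0" and aB: "(pA - pB) \<bullet> (pC - pB) > 0"
    and aC: "(pA - pC) \<bullet> (pB - pC) > 0"
  shows "foot pB pC pA \<noteq> foot pC pA pB"
    and "\<exists>x1 x2 x3. 0 < x1 \<and> 0 < x2 \<and> 0 < x3 \<and> x1 + x2 + x3 = 1 \<and>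
           x1 *\<^sub>R foot pA pB pC + x2 *\<^sub>R foot pB pC pA + x3 *\<^sub>R foot pC pA pB = pA + pB + pC"
    and "(pA + pB + pC) \<bullet> (pA + pB + pC) < K"
proof -
  define dAB dBC dCA where "dAB = pA \<bullet> pB" "dBC = pB \<bullet> pC" "dCA = pC \<bullet> pA"
  have r: "pA \<bullet> pB = dAB" "pB \<bullet> pA = dAB" "pB \<bullet> pC = dBC" "pC \<bullet> pB = dBC"
     "pC \<bullet> pA = dCA" "pA \<bullet> pC = dCA" unfolding dAB_dBC_dCA_def by (simp_all add: inner_commute)
  define al1 al2 al3 where "al1 = dBC - dAB - dCA + K" "al2 = dCA - dAB - dBC + K" "al3 = dAB - dCA - dBC + K"
  have a1: "al1 > 0" using aA unfolding al1_al2_al3_def by (simp add: inner_diff_left inner_diff_right r nA nB nC)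
  have a2: "al2 > 0" using aB unfolding al1_al2_al3_def by (simp add: inner_diff_left inner_diff_right r nA nB nC)
  have a3: "al3 > 0" using aC unfolding al1_al2_al3_def by (simp add: inner_diff_left inner_diff_right r nA nB nC)
  have fA: "foot pA pB pC = pB + (al2 / (al2 + al3)) *\<^sub>R (pC - pB)"
    unfolding foot_def al1_al2_al3_def by (simp add: inner_diff_left inner_diff_right r nA nB nC algebra_simps)
  have fB: "foot pB pC pA = pC + (al3 / (al3 + al1)) *\<^sub>R (pA - pC)"
    unfolding foot_def al1_al2_al3_def by (simp add: inner_diff_left inner_diff_right r nA nB nC algebra_simps)
  have fC: "foot pC pA pB = pA + (al1 / (al1 + al2)) *\<^sub>R (pB - pA)"
    unfolding foot_def al1_al2_al3_def by (simp add: inner_diff_left inner_diff_right r nA nB nC algebra_simps)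
  have dd: "dAB = K - (al1+al2)/2" "dBC = K - (al2+al3)/2" "dCA = K - (al3+al1)/2"
    unfolding al1_al2_al3_def by (simp_all add: field_simps)
  have nz: "al3 + al1 \<noteq> 0" "al1 + al2 \<noteq> 0" "al2 + al3 \<noteq> 0" using a1 a2 a3 by auto
  show "foot pB pC pA \<noteq> foot pC pA pB"
  proof
    assume eq: "foot pB pC pA = foot pC pA pB"
    have "(1 - al3 / (al3 + al1)) *\<^sub>R (pC - pA) = (al1 / (al1 + al2)) *\<^sub>R (pB - pA)"
      using eq unfolding fB fC by (simp add: algebra_simps)
    hence "cross2 (pB - pA) ((1 - al3 / (al3 + al1)) *\<^sub>R (pC - pA)) = cross2 (pB - pA) ((al1 / (al1 + al2)) *\<^sub>R (pB - pA))"
      by simp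
    hence "(1 - al3 / (al3 + al1)) * cross2 (pB - pA) (pC - pA) = 0"
      unfolding cross2_scaleR_right cross2_self by simp
    hence "1 - al3 / (al3 + al1) = 0" using cr by simp
    hence "al1 = 0" using nz(1) by (simp add: field_simps)
    thus False using a1 by simp
  qed
  define S where "S = al1*al2 + al2*al3 + al3*al1"
  have Sp: "S > 0" unfolding S_def using a1 a2 a3 by (simp add: add_pos_pos)
  define l1 l2 l3 where "l1 = al2*al3/S" "l2 = al3*al1/S" "l3 = al1*al2/S"
  have lp: "l1 > 0" "l2 > 0" "l3 > 0" unfolding l1_l2_l3_def using a1 a2 a3 Sp by simp_all
  have ls: "l1 + l2 + l3 = 1"
  proof -
    have "l1 + l2 + l3 = (al2*al3 + al3*al1 + al1*al2)/S" unfolding l1_l2_l3_def by (simp add: add_divide_distrib)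
    also have "\<dots> = S/S" unfolding S_def by (simp add: algebra_simps)
    also have "\<dots> = 1" using Sp by simp
    finally show ?thesis .
  qed
  have uB: "pA \<bullet> (pB - pA) = -(al1+al2)/2" "pB \<bullet> (pB - pA) = (al1+al2)/2" "pC \<bullet> (pB - pA) = (al1-al2)/2"
    by (simp_all add: inner_diff_right r nA nB nC dd field_simps)
  have uC: "pA \<bullet> (pC - pA) = -(al3+al1)/2" "pB \<bullet> (pC - pA) = (al1-al3)/2" "pC \<bullet> (pC - pA) = (al3+al1)/2"
    by (simp_all add: inner_diff_right r nA nB nC dd field_simps)
  have HL: "pA + pB + pC = l1 *\<^sub>R pA + l2 *\<^sub>R pB + l3 *\<^sub>R pC"
  proof -
    have "(pA + pB + pC) - (l1 *\<^sub>R pA + l2 *\<^sub>R pB + l3 *\<^sub>R pC) = 0"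
    proof (rule vec2_zero_test[OF cr])
      show "(pA + pB + pC - (l1 *\<^sub>R pA + l2 *\<^sub>R pB + l3 *\<^sub>R pC)) \<bullet> (pB - pA) = 0"
        unfolding inner_diff_left inner_add_left inner_scaleR_left uB l1_l2_l3_def using Sp
        by (simp add: field_simps) (simp add: S_def algebra_simps)
      show "(pA + pB + pC - (l1 *\<^sub>R pA + l2 *\<^sub>R pB + l3 *\<^sub>R pC)) \<bullet> (pC - pA) = 0"
        unfolding inner_diff_left inner_add_left inner_scaleR_left uC l1_l2_l3_def using Sp
        by (simp add: field_simps) (simp add: S_def algebra_simps)
    qed
    thus ?thesis by simp
  qed
  show "(pA + pB + pC) \<bullet> (pA + pB + pC) < K"
  proof -
    have e: "(l1 *\<^sub>R pA + l2 *\<^sub>R pB + l3 *\<^sub>R pC) \<bullet> (l1 *\<^sub>R pA + l2 *\<^sub>R pB + l3 *\<^sub>R pC)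
      = K*(l1^2+l2^2+l3^2) + 2*l1*l2*dAB + 2*l2*l3*dBC + 2*l3*l1*dCA"
      by (simp add: inner_add_left inner_add_right r nA nB nC power2_eq_square algebra_simps)
    have k: "K = K * (l1+l2+l3)^2" using ls by simp
    have "K - (K*(l1^2+l2^2+l3^2) + 2*l1*l2*dAB + 2*l2*l3*dBC + 2*l3*l1*dCA)
        = l1*l2*(al1+al2) + l2*l3*(al2+al3) + l3*l1*(al3+al1)"
      by (subst (1) k, simp add: dd power2_eq_square algebra_simps, simp add: field_simps)
    moreover have "l1*l2*(al1+al2) + l2*l3*(al2+al3) + l3*l1*(al3+al1) > 0"
      using lp a1 a2 a3 by (intro add_pos_pos mult_pos_pos) simp_all
    ultimately show ?thesis unfolding HL e by linarith
  qed
  define x1 x2 x3 where "x1 = (al2+al3)*al1/(2*S)" "x2 = (al3+al1)*al2/(2*S)" "x3 = (al1+al2)*al3/(2*S)"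
  have xp: "x1 > 0" "x2 > 0" "x3 > 0" unfolding x1_x2_x3_def using a1 a2 a3 Sp by simp_all
  have xs: "x1 + x2 + x3 = 1"
  proof -
    have "x1 + x2 + x3 = ((al2+al3)*al1 + (al3+al1)*al2 + (al1+al2)*al3)/(2*S)" unfolding x1_x2_x3_def by (simp add: add_divide_distrib)
    also have "\<dots> = (2*S)/(2*S)" unfolding S_def by (simp add: algebra_simps)
    also have "\<dots> = 1" using Sp by simp
    finally show ?thesis .
  qed
  have fA': "(al2+al3) *\<^sub>R foot pA pB pC = al3 *\<^sub>R pB + al2 *\<^sub>R pC"
  proof -
    have "(al2+al3) *\<^sub>R foot pA pB pC = (al2+al3) *\<^sub>R pB + ((al2+al3)*(al2/(al2+al3))) *\<^sub>R (pC - pB)"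
      unfolding fA by (simp only: scaleR_add_right scaleR_scaleR)
    also have "\<dots> = (al2+al3) *\<^sub>R pB + al2 *\<^sub>R (pC - pB)" using nz(3) by simp
    also have "\<dots> = al3 *\<^sub>R pB + al2 *\<^sub>R pC" by (simp add: algebra_simps)
    finally show ?thesis .
  qed
  have fB': "(al3+al1) *\<^sub>R foot pB pC pA = al1 *\<^sub>R pC + al3 *\<^sub>R pA"
  proof -
    have "(al3+al1) *\<^sub>R foot pB pC pA = (al3+al1) *\<^sub>R pC + ((al3+al1)*(al3/(al3+al1))) *\<^sub>R (pA - pC)"
      unfolding fB by (simp only: scaleR_add_right scaleR_scaleR)
    also have "\<dots> = (al3+al1) *\<^sub>R pC + al3 *\<^sub>R (pA - pC)" using nz(1) by simp
    also have "\<dots> = al1 *\<^sub>R pC + al3 *\<^sub>R pA" by (simp add: algebra_simps)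
    finally show ?thesis .
  qed
  have fC': "(al1+al2) *\<^sub>R foot pC pA pB = al2 *\<^sub>R pA + al1 *\<^sub>R pB"
  proof -
    have "(al1+al2) *\<^sub>R foot pC pA pB = (al1+al2) *\<^sub>R pA + ((al1+al2)*(al1/(al1+al2))) *\<^sub>R (pB - pA)"
      unfolding fC by (simp only: scaleR_add_right scaleR_scaleR)
    also have "\<dots> = (al1+al2) *\<^sub>R pA + al1 *\<^sub>R (pB - pA)" using nz(2) by simp
    also have "\<dots> = al2 *\<^sub>R pA + al1 *\<^sub>R pB" by (simp add: algebra_simps)
    finally show ?thesis .
  qed
  have x1f: "x1 *\<^sub>R foot pA pB pC = (al1/(2*S)) *\<^sub>R (al3 *\<^sub>R pB + al2 *\<^sub>R pC)"
    unfolding fA'[symmetric] scaleR_scaleR x1_x2_x3_def by (simp add: ac_simps)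
  have x2f: "x2 *\<^sub>R foot pB pC pA = (al2/(2*S)) *\<^sub>R (al1 *\<^sub>R pC + al3 *\<^sub>R pA)"
    unfolding fB'[symmetric] scaleR_scaleR x1_x2_x3_def by (simp add: ac_simps)
  have x3f: "x3 *\<^sub>R foot pC pA pB = (al3/(2*S)) *\<^sub>R (al2 *\<^sub>R pA + al1 *\<^sub>R pB)"
    unfolding fC'[symmetric] scaleR_scaleR x1_x2_x3_def by (simp add: ac_simps)
  have "x1 *\<^sub>R foot pA pB pC + x2 *\<^sub>R foot pB pC pA + x3 *\<^sub>R foot pC pA pB = l1 *\<^sub>R pA + l2 *\<^sub>R pB + l3 *\<^sub>R pC"
    unfolding x1f x2f x3f l1_l2_l3_def using Sp
    by (intro vec2_eqI) (simp_all add: field_simps)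
  with HL xp xs show "\<exists>x1 x2 x3. 0 < x1 \<and> 0 < x2 \<and> 0 < x3 \<and> x1 + x2 + x3 = 1 \<and>
           x1 *\<^sub>R foot pA pB pC + x2 *\<^sub>R foot pB pC pA + x3 *\<^sub>R foot pC pA pB = pA + pB + pC"
    by metis
qed

lemma acute_dot:
  fixes X V Y :: point
  assumes "angle_at X V Y < pi/2" "X \<noteq> V" "Y \<noteq> V"
  shows "(X - V) \<bullet> (Y - V) > 0"
proof -
  define c where "c = ((X - V) \<bullet> (Y - V)) / (norm (X - V) * norm (Y - V))"
  have np: "norm (X - V) * norm (Y - V) > 0" using assms(2,3) by simp
  have "\<bar>(X - V) \<bullet> (Y - V)\<bar> \<le> norm (X - V) * norm (Y - V)" by (rule Cauchy_Schwarz_ineq2)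
  moreover have "\<bar>c\<bar> = \<bar>(X - V) \<bullet> (Y - V)\<bar> / (norm (X - V) * norm (Y - V))"
    unfolding c_def using np by (simp add: abs_divide)
  ultimately have c1: "\<bar>c\<bar> \<le> 1" using np by (simp add: divide_le_eq_1_pos)
  have "arccos c < arccos 0" using assms(1) unfolding angle_at_def c_def by simp
  hence "0 < c" using arccos_less_mono[OF c1, of 0] by simp
  thus ?thesis unfolding c_def using np by (simp add: zero_less_divide_iff)
qed

lemma foot_shift: "foot A B C = Z + foot (A - Z) (B - Z) (C - Z)"
  unfolding foot_def by (simp add: algebra_simps)

lemma cross2_cyc: "cross2 (HB - HA) (HC - HA) = cross2 (HC - HB) (HA - HB)"
  unfolding cross2_def by (simp add: algebra_simps)

lemma side_dist:
  fixes pA pB pC :: point and Z :: point and K :: real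
  assumes nA: "pA \<bullet> pA = K" and nB: "pB \<bullet> pB = K" and nC: "pC \<bullet> pC = K" and Kp: "K > 0"
    and cr: "cross2 (pB - pA) (pC - pA) \<noteq> 0"
    and aA: "(pB - pA) \<bullet> (pC - pA) > 0" and aB: "(pA - pB) \<bullet> (pC - pB) > 0"
    and aC: "(pA - pC) \<bullet> (pB - pC) > 0"
  shows "infdist (Z + (pA + pB + pC)) (sideline (Z + foot pB pC pA) (Z + foot pC pA pB))
     = \<bar>K + pA \<bullet> pB + pB \<bullet> pC + pC \<bullet> pA\<bar> / (2 * sqrt K)"
proof -
  have ne: "Z + foot pB pC pA \<noteq> Z + foot pC pA pB" using orthic_core2(1)[OF assms(1-3,5-8)] by simp
  have n0: "pA \<noteq> 0" using nA Kp by auto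
  have perp: "((Z + foot pC pA pB) - (Z + foot pB pC pA)) \<bullet> pA = 0"
    using orthic_core(1)[OF assms(1-3,5-8)] by simp
  have "infdist (Z + (pA + pB + pC)) (sideline (Z + foot pB pC pA) (Z + foot pC pA pB))
      = \<bar>((Z + (pA + pB + pC)) - (Z + foot pB pC pA)) \<bullet> pA\<bar> / norm pA"
    by (rule infdist_line_normal[OF ne n0 perp])
  also have "((Z + (pA + pB + pC)) - (Z + foot pB pC pA)) \<bullet> pA = (K + pA \<bullet> pB + pB \<bullet> pC + pC \<bullet> pA) / 2"
    using orthic_core(2)[OF assms(1-3,5-8)] by simp
  also have "norm pA = sqrt K" using nA by (simp add: norm_eq_sqrt_inner)
  finally show ?thesis by simp
qed

theorem corollary5p9:
  fixes A B C Z :: point and a b th :: real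
  assumes "acute_triangle A B C"
    and "a > b" and "b > 0"
    and "is_circumcenter Z A B C"
    and "circumscribed_about A B C (ellipse Z a b th)"
  shows "inradius (foot A B C) (foot B C A) (foot C A B) = a * b / (a + b)"
proof -
  have ncol: "\<not> collinear {A, B, C}" and angA: "angle_at B A C < pi / 2"
    and angB: "angle_at A B C < pi / 2" and angC: "angle_at A C B < pi / 2"
    using assms(1) unfolding acute_triangle_def nondegenerate_triangle_def by auto
  have AB: "A \<noteq> B" and BC: "B \<noteq> C" and CA: "C \<noteq> A"
  proof -
    show "A \<noteq> B" proof assume "A = B" hence "{A,B,C} = {B,C}" by auto with ncol show False by (simp add: collinear_2) qed
    show "B \<noteq> C" proof assume "B = C" hence "{A,B,C} = {A,C}" by auto with ncol show False by (simp add: collinear_2) qed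
    show "C \<noteq> A" proof assume "C = A" hence "{A,B,C} = {A,B}" by auto with ncol show False by (simp add: collinear_2) qed
  qed
  have a0: "a > 0" using assms(2,3) by simp
  have tBC: "tangent_to (sideline B C) (ellipse Z a b th)" and tCA: "tangent_to (sideline C A) (ellipse Z a b th)"
    and tAB: "tangent_to (sideline A B) (ellipse Z a b th)" using assms(5) unfolding circumscribed_about_def by auto
  define pA pB pC where "pA = A - Z" "pB = B - Z" "pC = C - Z"
  define K where "K = pA \<bullet> pA"
  have dd: "dist Z A = dist Z B" "dist Z B = dist Z C" using assms(4) unfolding is_circumcenter_def by auto
  have nA: "pA \<bullet> pA = K" unfolding K_def ..
  have nB: "pB \<bullet> pB = K"
  proof -
    have "norm pB = norm pA" using dd unfolding pA_pB_pC_def dist_norm by (simp add: norm_minus_commute)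
    hence "(norm pB)^2 = (norm pA)^2" by simp
    thus ?thesis unfolding K_def power2_norm_eq_inner .
  qed
  have nC: "pC \<bullet> pC = K"
  proof -
    have "norm pC = norm pA" using dd unfolding pA_pB_pC_def dist_norm by (simp add: norm_minus_commute)
    hence "(norm pC)^2 = (norm pA)^2" by simp
    thus ?thesis unfolding K_def power2_norm_eq_inner .
  qed
  have dif: "pB - pA = B - A" "pC - pA = C - A" "pA - pB = A - B" "pC - pB = C - B"
    "pA - pC = A - C" "pB - pC = B - C" unfolding pA_pB_pC_def by simp_all
  have cr1: "cross2 (pB - pA) (pC - pA) \<noteq> 0" using ncol unfolding dif collinear_cross by simp
  have cr2: "cross2 (pC - pB) (pA - pB) \<noteq> 0"
  proof -
    have "\<not> collinear {B, C, A}" using ncol by (simp add: insert_commute)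
    thus ?thesis unfolding dif collinear_cross by simp
  qed
  have cr3: "cross2 (pA - pC) (pB - pC) \<noteq> 0"
  proof -
    have "\<not> collinear {C, A, B}" using ncol by (simp add: insert_commute)
    thus ?thesis unfolding dif collinear_cross by simp
  qed
  have alA: "(pB - pA) \<bullet> (pC - pA) > 0" unfolding dif using acute_dot[OF angA AB[symmetric] CA] .
  have alB: "(pA - pB) \<bullet> (pC - pB) > 0" unfolding dif using acute_dot[OF angB AB BC[symmetric]] .
  have alC: "(pA - pC) \<bullet> (pB - pC) > 0" unfolding dif using acute_dot[OF angC CA[symmetric] BC] .
  have alA': "(pA - pB) \<bullet> (pC - pB) > 0" using alB .
  have Kp: "K > 0"
  proof -
    have "K \<ge> 0" unfolding K_def by simp
    moreover have "K \<noteq> 0"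
    proof
      assume "K = 0" hence "pA = 0" "pB = 0" using nA nB by auto
      hence "A = B" unfolding pA_pB_pC_def by simp
      with AB show False ..
    qed
    ultimately show ?thesis by simp
  qed
  define xA yA xB yB xC yC where "xA = rx Z th A" "yA = ry Z th A" "xB = rx Z th B" "yB = ry Z th B"
    "xC = rx Z th C" "yC = ry Z th C"
  have circ: "xA^2 + yA^2 = K" "xB^2 + yB^2 = K" "xC^2 + yC^2 = K"
    using rx_ry_inner[of Z th A A] rx_ry_inner[of Z th B B] rx_ry_inner[of Z th C C] nA nB nC
    unfolding xA_yA_xB_yB_xC_yC_def pA_pB_pC_def by (simp_all add: power2_eq_square)
  have rne: "(xA, yA) \<noteq> (xB, yB)" if "X \<noteq> Y" "xA = rx Z th X" "yA = ry Z th X" "xB = rx Z th Y" "yB = ry Z th Y"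
    for X Y xA yA xB yB
  proof
    assume "(xA, yA) = (xB, yB)"
    hence "(Y - X) \<bullet> (Y - X) = 0" using rx_ry_diff[of Z th Y X] that by simp
    thus False using that(1) by simp
  qed
  have ne12: "(xA, yA) \<noteq> (xB, yB)" by (rule rne[OF AB]) (simp_all add: xA_yA_xB_yB_xC_yC_def)
  have ne13: "(xA, yA) \<noteq> (xC, yC)" by (rule rne[OF CA[symmetric]]) (simp_all add: xA_yA_xB_yB_xC_yC_def)
  have ne23: "(xB, yB) \<noteq> (xC, yC)" by (rule rne[OF BC]) (simp_all add: xA_yA_xB_yB_xC_yC_def)
  have t12: "(xA*yB - yA*xB)^2 = b^2*(xB-xA)^2 + a^2*(yB-yA)^2"
    using tangent_cond[OF AB a0 assms(3) tAB] unfolding xA_yA_xB_yB_xC_yC_def .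
  have t23: "(xB*yC - yB*xC)^2 = b^2*(xC-xB)^2 + a^2*(yC-yB)^2"
    using tangent_cond[OF BC a0 assms(3) tBC] unfolding xA_yA_xB_yB_xC_yC_def .
  have t13: "(xA*yC - yA*xC)^2 = b^2*(xC-xA)^2 + a^2*(yC-yA)^2"
  proof -
    have "(xC*yA - yC*xA)^2 = b^2*(xA-xC)^2 + a^2*(yA-yC)^2"
      using tangent_cond[OF CA a0 assms(3) tCA] unfolding xA_yA_xB_yB_xC_yC_def .
    moreover have "(xC*yA - yC*xA)^2 = (xA*yC - yA*xC)^2" "(xA-xC)^2 = (xC-xA)^2" "(yA-yC)^2 = (yC-yA)^2"
      by (simp_all add: power2_eq_square algebra_simps)
    ultimately show ?thesis by simp
  qed
  define h where "h = (xA+xB+xC)^2 + (yA+yB+yC)^2"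
  have hH: "h = (pA+pB+pC) \<bullet> (pA+pB+pC)"
  proof -
    have "rx Z th A + rx Z th B + rx Z th C = (pA+pB+pC) \<bullet> vector [cos th, sin th]"
      "ry Z th A + ry Z th B + ry Z th C = (pA+pB+pC) \<bullet> vector [- sin th, cos th]"
      unfolding rx_def ry_def pA_pB_pC_def[symmetric] inner_add_left by simp_all
    thus ?thesis unfolding h_def xA_yA_xB_yB_xC_yC_def using rot_inner[of "pA+pB+pC" th "pA+pB+pC"]
      by (simp add: power2_eq_square)
  qed
  have hK: "h < K" unfolding hH by (rule orthic_core2(3)[OF nA nB nC cr1 alA alB alC])
  have core_res: "K = (a+b)^2 \<and> h = (a-b)^2"
    by (rule core[OF circ ne12 ne13 ne23 t12 t13 t23 assms(3) assms(2) h_def hK])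
  have s3: "K + pA \<bullet> pB + pB \<bullet> pC + pC \<bullet> pA = -2*a*b"
  proof -
    have "h = 3*K + 2*(pA \<bullet> pB + pB \<bullet> pC + pC \<bullet> pA)" unfolding hH
      by (simp add: inner_add_left inner_add_right nA nB nC inner_commute)
    thus ?thesis using core_res by (simp add: power2_eq_square algebra_simps)
  qed
  have sK: "sqrt K = a + b" using core_res a0 assms(3) by simp
  define r0 where "r0 = a * b / (a + b)"
  have r0p: "r0 > 0" unfolding r0_def using a0 assms(3) by simp
  have dval: "\<bar>K + pA \<bullet> pB + pB \<bullet> pC + pC \<bullet> pA\<bar> / (2 * sqrt K) = r0"
  proof -
    have "\<bar>K + pA \<bullet> pB + pB \<bullet> pC + pC \<bullet> pA\<bar> = 2 * (a * b)" unfolding s3 using a0 assms(3) by (simp add: abs_mult)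
    hence "\<bar>K + pA \<bullet> pB + pB \<bullet> pC + pC \<bullet> pA\<bar> / (2 * sqrt K) = (2 * (a * b)) / (2 * (a + b))" by (simp only: sK)
    also have "\<dots> = a * b / (a + b)" by (rule mult_divide_mult_cancel_left) simp
    finally show ?thesis unfolding r0_def .
  qed
  define HA HB HC H where "HA = foot A B C" "HB = foot B C A" "HC = foot C A B" "H = A + B + C - 2 *\<^sub>R Z"
  have HA: "HA = Z + foot pA pB pC" and HB: "HB = Z + foot pB pC pA" and HC: "HC = Z + foot pC pA pB"
    unfolding HA_HB_HC_H_def pA_pB_pC_def by (rule foot_shift)+
  have H: "H = Z + (pA + pB + pC)" and H2: "H = Z + (pB + pC + pA)" and H3: "H = Z + (pC + pA + pB)"
    unfolding HA_HB_HC_H_def pA_pB_pC_def by (simp_all add: algebra_simps scaleR_2)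
  have d1: "infdist H (sideline HB HC) = r0"
    unfolding H HB HC side_dist[OF nA nB nC Kp cr1 alA alB alC] dval ..
  have d2: "infdist H (sideline HC HA) = r0"
  proof -
    have "infdist H (sideline HC HA) = \<bar>K + pB \<bullet> pC + pC \<bullet> pA + pA \<bullet> pB\<bar> / (2 * sqrt K)"
      unfolding H2 HC HA by (rule side_dist[OF nB nC nA Kp cr2]) (use alB alC alA in \<open>simp_all add: inner_commute\<close>)
    also have "\<dots> = r0" using dval by (simp add: algebra_simps)
    finally show ?thesis .
  qed
  have d3: "infdist H (sideline HA HB) = r0"
  proof -
    have "infdist H (sideline HA HB) = \<bar>K + pC \<bullet> pA + pA \<bullet> pB + pB \<bullet> pC\<bar> / (2 * sqrt K)"
      unfolding H3 HA HB by (rule side_dist[OF nC nA nB Kp cr3]) (use alB alC alA in \<open>simp_all add: inner_commute\<close>)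
    also have "\<dots> = r0" using dval by (simp add: algebra_simps)
    finally show ?thesis .
  qed
  obtain x1 x2 x3 where x: "0 < x1" "0 < x2" "0 < x3" "x1 + x2 + x3 = 1"
    "x1 *\<^sub>R foot pA pB pC + x2 *\<^sub>R foot pB pC pA + x3 *\<^sub>R foot pC pA pB = pA + pB + pC"
    using orthic_core2(2)[OF nA nB nC cr1 alA alB alC] by blast
  have Hc: "H = x1 *\<^sub>R HA + x2 *\<^sub>R HB + x3 *\<^sub>R HC"
  proof -
    have "x1 *\<^sub>R HA + x2 *\<^sub>R HB + x3 *\<^sub>R HC = (x1 + x2 + x3) *\<^sub>R Z + (x1 *\<^sub>R foot pA pB pC + x2 *\<^sub>R foot pB pC pA + x3 *\<^sub>R foot pC pA pB)"
      unfolding HA HB HC by (simp add: algebra_simps)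
    thus ?thesis unfolding x(5) x(4) H by simp
  qed
  have HBC: "HB \<noteq> HC" unfolding HB HC using orthic_core2(1)[OF nA nB nC cr1 alA alB alC] by simp
  have ncolH: "\<not> collinear {HA, HB, HC}"
  proof -
    have "\<bar>cross2 (HC - HB) (H - HB)\<bar> / norm (HC - HB) = r0" using d1 unfolding infdist_line[OF HBC] .
    hence "cross2 (HC - HB) (H - HB) \<noteq> 0" using r0p by auto
    moreover have "cross2 (HC - HB) (H - HB) = x1 * cross2 (HC - HB) (HA - HB)"
      by (rule bary_cross[OF Hc x(4)])
    ultimately have "cross2 (HC - HB) (HA - HB) \<noteq> 0" by simp
    thus ?thesis unfolding collinear_cross using cross2_cyc[where HA=HA and HB=HB and HC=HC] by simp
  qed
  have Hint: "H \<in> interior (convex hull {HA, HB, HC})"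
  proof -
    have "interior (convex hull {HA, HB, HC}) =
         {v. \<exists>x y z. 0 < x \<and> 0 < y \<and> 0 < z \<and> x + y + z = 1 \<and> x *\<^sub>R HA + y *\<^sub>R HB + z *\<^sub>R HC = v}"
      by (rule interior_convex_hull_3_minimal[OF ncolH]) simp
    thus ?thesis using x Hc by blast
  qed
  have inc: "is_incircle HA HB HC H r0" unfolding is_incircle_def using r0p Hint d1 d2 d3 by simp
  have "inradius HA HB HC = r0" unfolding inradius_def
  proof (rule the_equality)
    show "\<exists>I. is_incircle HA HB HC I r0" using inc by blast
  next
    fix r assume "\<exists>I. is_incircle HA HB HC I r"
    then obtain I where "is_incircle HA HB HC I r" by blast
    hence "r = rho HA HB HC" by (rule incircle_unique)
    moreover have "r0 = rho HA HB HC" using inc by (rule incircle_unique)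
    ultimately show "r = r0" by simp
  qed
  thus ?thesis unfolding HA_HB_HC_H_def r0_def .
qed

end
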